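(* There is no algorithm which, given a propositional Hilbert-type calculus $\mathbf{C}$ and a finite-valued logic $\mathbf{M}$ over the same language, decides whether $\mathbf{C}$ is weakly sound for $\mathbf{M}$, i.e., whether $\mathrm{Thm}(\mathbf{C})\subseteq\mathrm{Taut}(\mathbf{M})$.
   Context: A propositional language has variables $X_1,X_2,\ldots$ and finitely many connectives with arities (0-ary ones are constants). A substitution maps variables to formulas; $F\sigma$ is the result of simultaneously replacing each variable $X$ in $F$ by $\sigma(X)$. A propositional Hilbert-type calculus $\mathbf{C}$ is given by a finite set of axioms (formulas) and a finite set of rules, each consisting of premises $A_1,\ldots,A_n$ and a conclusion $C$ (formulas). A derivation is a finite sequence $F_1,\ldots,F_s$ in which each $F_i$ is either $A\sigma$ for an axiom $A$ and substitution $\sigma$, or $C\sigma$ for a rule with premises $A_1,\ldots,A_n$ and conclusion $C$ and a substitution $\sigma$ such that each $A_j\sigma$ occurs earlier in the sequence. $\mathrm{Thm}(\mathbf{C})$ is the set of formulas having a derivation. A finite-valued logic $\mathbf{M}$ is given by a finite set $V(\mathbf{M})$ of truth values, designated values $V^+(\mathbf{M})\subseteq V(\mathbf{M})$, and a truth function for each connective; valuations map variables to truth values and extend to formulas; a tautology is a formula designated under every valuation, and $\mathrm{Taut}(\mathbf{M})$ is the set of tautologies. *)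

theory Defs
  imports Main "HOL-Library.Nat_Bijection"
begin

text \<open>A language is given by the list of arities of its connectives;
  connective number c (c < length L) has arity L!c (arity 0 = constant).
  Variables X_0, X_1, ... are indexed by natural numbers.\<close>
type_synonym language = "nat list"

datatype form = Var nat | Con nat "form list"

fun wf_form :: "language \<Rightarrow> form \<Rightarrow> bool" where
  "wf_form L (Var x) = True"
| "wf_form L (Con c as) = (c < length L \<and> length as = L ! c \<and> (\<forall>a\<in>set as. wf_form L a))"

fun subst :: "(nat \<Rightarrow> form) \<Rightarrow> form \<Rightarrow> form" where
  "subst \<sigma> (Var x) = \<sigma> x"
| "subst \<sigma> (Con c as) = Con c (map (subst \<sigma>) as)"

definition is_subst :: "language \<Rightarrow> (nat \<Rightarrow> form) \<Rightarrow> bool" where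
  "is_subst L \<sigma> = (\<forall>x. wf_form L (\<sigma> x))"

type_synonym calculus = "form list \<times> (form list \<times> form) list"

definition calc_axioms :: "calculus \<Rightarrow> form list" where "calc_axioms C = fst C"
definition calc_rules :: "calculus \<Rightarrow> (form list \<times> form) list" where "calc_rules C = snd C"

definition calc_over :: "language \<Rightarrow> calculus \<Rightarrow> bool" where
  "calc_over L C = ((\<forall>A\<in>set (calc_axioms C). wf_form L A) \<and>
      (\<forall>(ps, c)\<in>set (calc_rules C). wf_form L c \<and> (\<forall>p\<in>set ps. wf_form L p)))"

definition is_derivation :: "language \<Rightarrow> calculus \<Rightarrow> form list \<Rightarrow> bool" where
  "is_derivation L C Fs = (\<forall>i<length Fs.
      (\<exists>A \<sigma>. A \<in> set (calc_axioms C) \<and> is_subst L \<sigma> \<and> Fs ! i = subst \<sigma> A) \<or>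
      (\<exists>ps c \<sigma>. (ps, c) \<in> set (calc_rules C) \<and> is_subst L \<sigma> \<and> Fs ! i = subst \<sigma> c \<and>
          (\<forall>p\<in>set ps. \<exists>j<i. Fs ! j = subst \<sigma> p)))"

definition Thm :: "language \<Rightarrow> calculus \<Rightarrow> form set" where
  "Thm L C = {F. \<exists>Fs. is_derivation L C Fs \<and> F \<in> set Fs}"

text \<open>A finite-valued logic: number n of truth values (the values are 0..<n),
  list of designated values, and for each connective c its truth function,
  given as a table: the value on arguments v_1..v_k is the entry at index
  tup_index n [v_1,...,v_k] (the base-n number with digits v_1...v_k).\<close>
type_synonym logic = "nat \<times> nat list \<times> nat list list"

definition lvals :: "logic \<Rightarrow> nat" where "lvals M = fst M"
definition ldesig :: "logic \<Rightarrow> nat list" where "ldesig M = fst (snd M)"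
definition ltables :: "logic \<Rightarrow> nat list list" where "ltables M = snd (snd M)"

definition tup_index :: "nat \<Rightarrow> nat list \<Rightarrow> nat" where
  "tup_index n vs = foldl (\<lambda>acc v. acc * n + v) 0 vs"

definition truth_fun :: "logic \<Rightarrow> nat \<Rightarrow> nat list \<Rightarrow> nat" where
  "truth_fun M c vs = ltables M ! c ! tup_index (lvals M) vs"

definition logic_over :: "language \<Rightarrow> logic \<Rightarrow> bool" where
  "logic_over L M = (0 < lvals M \<and> (\<forall>d\<in>set (ldesig M). d < lvals M) \<and>
      length (ltables M) = length L \<and>
      (\<forall>c<length L. length (ltables M ! c) = lvals M ^ (L ! c) \<and>
          (\<forall>v\<in>set (ltables M ! c). v < lvals M)))"

fun eval :: "logic \<Rightarrow> (nat \<Rightarrow> nat) \<Rightarrow> form \<Rightarrow> nat" where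
  "eval M v (Var x) = v x"
| "eval M v (Con c as) = truth_fun M c (map (eval M v) as)"

definition valuation :: "logic \<Rightarrow> (nat \<Rightarrow> nat) \<Rightarrow> bool" where
  "valuation M v = (\<forall>x. v x < lvals M)"

definition Taut :: "language \<Rightarrow> logic \<Rightarrow> form set" where
  "Taut L M = {F. wf_form L F \<and> (\<forall>v. valuation M v \<longrightarrow> eval M v F \<in> set (ldesig M))}"

definition weakly_sound :: "language \<Rightarrow> calculus \<Rightarrow> logic \<Rightarrow> bool" where
  "weakly_sound L C M = (Thm L C \<subseteq> Taut L M)"

datatype recf = Zero | Succ | Proj nat | Comp recf "recf list" | Prim recf recf | Mn recf

inductive reval :: "recf \<Rightarrow> nat list \<Rightarrow> nat \<Rightarrow> bool" where
  zero: "reval Zero xs 0"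
| succ: "reval Succ (x # xs) (Suc x)"
| proj: "i < length xs \<Longrightarrow> reval (Proj i) xs (xs ! i)"
| comp: "length ys = length gs \<Longrightarrow> (\<forall>i<length gs. reval (gs ! i) xs (ys ! i)) \<Longrightarrow>
           reval f ys z \<Longrightarrow> reval (Comp f gs) xs z"
| prim0: "reval f xs z \<Longrightarrow> reval (Prim f g) (0 # xs) z"
| primS: "reval (Prim f g) (n # xs) y \<Longrightarrow> reval g (n # y # xs) z \<Longrightarrow>
           reval (Prim f g) (Suc n # xs) z"
| mn: "reval f (n # xs) 0 \<Longrightarrow> (\<forall>m<n. \<exists>y. y \<noteq> 0 \<and> reval f (m # xs) y) \<Longrightarrow>
           reval (Mn f) xs n"

fun enc_form :: "form \<Rightarrow> nat" where
  "enc_form (Var x) = prod_encode (0, x)"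
| "enc_form (Con c as) = prod_encode (Suc c, list_encode (map enc_form as))"

definition enc_calc :: "calculus \<Rightarrow> nat" where
  "enc_calc C = prod_encode (list_encode (map enc_form (calc_axioms C)),
     list_encode (map (\<lambda>(ps, c). prod_encode (list_encode (map enc_form ps), enc_form c))
                      (calc_rules C)))"

definition enc_logic :: "logic \<Rightarrow> nat" where
  "enc_logic M = prod_encode (lvals M, prod_encode (list_encode (ldesig M),
     list_encode (map list_encode (ltables M))))"

definition enc_instance :: "language \<Rightarrow> calculus \<Rightarrow> logic \<Rightarrow> nat" where
  "enc_instance L C M = prod_encode (list_encode L, prod_encode (enc_calc C, enc_logic M))"

end

theory Submission
  imports Defs
begin


section \<open>Generic derivability\<close>

inductive der :: "language \<Rightarrow> calculus \<Rightarrow> form \<Rightarrow> bool" for L C where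
  ax: "A \<in> set (calc_axioms C) \<Longrightarrow> is_subst L \<sigma> \<Longrightarrow> der L C (subst \<sigma> A)"
| rl: "(ps, c) \<in> set (calc_rules C) \<Longrightarrow> is_subst L \<sigma> \<Longrightarrow> (\<forall>p\<in>set ps. der L C (subst \<sigma> p))
       \<Longrightarrow> der L C (subst \<sigma> c)"

lemma deriv_der:
  assumes "is_derivation L C Fs"
  shows "\<forall>i<length Fs. der L C (Fs ! i)"
proof -
  have "\<And>i. i < length Fs \<longrightarrow> der L C (Fs ! i)"
  proof -
    fix i show "i < length Fs \<longrightarrow> der L C (Fs ! i)"
    proof (induction i rule: less_induct)
      case (less i)
      show ?case
      proof
        assume i: "i < length Fs"
        with assms have "(\<exists>A \<sigma>. A \<in> set (calc_axioms C) \<and> is_subst L \<sigma> \<and> Fs ! i = subst \<sigma> A) \<or>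
          (\<exists>ps c \<sigma>. (ps, c) \<in> set (calc_rules C) \<and> is_subst L \<sigma> \<and> Fs ! i = subst \<sigma> c \<and>
          (\<forall>p\<in>set ps. \<exists>j<i. Fs ! j = subst \<sigma> p))" unfolding is_derivation_def by blast
        then show "der L C (Fs ! i)"
        proof
          assume "\<exists>A \<sigma>. A \<in> set (calc_axioms C) \<and> is_subst L \<sigma> \<and> Fs ! i = subst \<sigma> A"
          then show ?thesis by (auto intro: der.ax)
        next
          assume "\<exists>ps c \<sigma>. (ps, c) \<in> set (calc_rules C) \<and> is_subst L \<sigma> \<and> Fs ! i = subst \<sigma> c \<and>
            (\<forall>p\<in>set ps. \<exists>j<i. Fs ! j = subst \<sigma> p)"
          then obtain ps c \<sigma> where h: "(ps, c) \<in> set (calc_rules C)" "is_subst L \<sigma>" "Fs ! i = subst \<sigma> c"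
            "\<forall>p\<in>set ps. \<exists>j<i. Fs ! j = subst \<sigma> p" by blast
          have "\<forall>p\<in>set ps. der L C (subst \<sigma> p)"
            using h(4) less.IH i by (metis order.strict_trans)
          then show ?thesis using h der.rl by metis
        qed
      qed
    qed
  qed
  then show ?thesis by blast
qed

definition dstep :: "language \<Rightarrow> calculus \<Rightarrow> form list \<Rightarrow> nat \<Rightarrow> bool" where
  "dstep L C Fs i = ((\<exists>A \<sigma>. A \<in> set (calc_axioms C) \<and> is_subst L \<sigma> \<and> Fs ! i = subst \<sigma> A) \<or>
      (\<exists>ps c \<sigma>. (ps, c) \<in> set (calc_rules C) \<and> is_subst L \<sigma> \<and> Fs ! i = subst \<sigma> c \<and>
          (\<forall>p\<in>set ps. \<exists>j<i. Fs ! j = subst \<sigma> p)))"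

lemma is_derivation_dstep: "is_derivation L C Fs = (\<forall>i<length Fs. dstep L C Fs i)"
  unfolding is_derivation_def dstep_def by blast

lemma dstep_mono:
  assumes "dstep L C Fs i" "\<forall>j\<le>i. Gs ! j = Fs ! j"
  shows "dstep L C Gs i"
proof -
  have e: "Gs ! i = Fs ! i" using assms(2) by simp
  from assms(1) show ?thesis unfolding dstep_def
  proof
    assume "\<exists>A \<sigma>. A \<in> set (calc_axioms C) \<and> is_subst L \<sigma> \<and> Fs ! i = subst \<sigma> A"
    then show "(\<exists>A \<sigma>. A \<in> set (calc_axioms C) \<and> is_subst L \<sigma> \<and> Gs ! i = subst \<sigma> A) \<or>
      (\<exists>ps c \<sigma>. (ps, c) \<in> set (calc_rules C) \<and> is_subst L \<sigma> \<and> Gs ! i = subst \<sigma> c \<and>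
          (\<forall>p\<in>set ps. \<exists>j<i. Gs ! j = subst \<sigma> p))" using e by simp
  next
    assume "\<exists>ps c \<sigma>. (ps, c) \<in> set (calc_rules C) \<and> is_subst L \<sigma> \<and> Fs ! i = subst \<sigma> c \<and>
          (\<forall>p\<in>set ps. \<exists>j<i. Fs ! j = subst \<sigma> p)"
    then obtain ps c \<sigma> where h: "(ps, c) \<in> set (calc_rules C)" "is_subst L \<sigma>" "Fs ! i = subst \<sigma> c"
          "\<forall>p\<in>set ps. \<exists>j<i. Fs ! j = subst \<sigma> p" by blast
    have "\<forall>p\<in>set ps. \<exists>j<i. Gs ! j = subst \<sigma> p"
    proof
      fix p assume "p \<in> set ps"
      then obtain j where "j < i" "Fs ! j = subst \<sigma> p" using h(4) by blast
      then show "\<exists>j<i. Gs ! j = subst \<sigma> p" using assms(2) by (metis less_imp_le)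
    qed
    then show "(\<exists>A \<sigma>. A \<in> set (calc_axioms C) \<and> is_subst L \<sigma> \<and> Gs ! i = subst \<sigma> A) \<or>
      (\<exists>ps c \<sigma>. (ps, c) \<in> set (calc_rules C) \<and> is_subst L \<sigma> \<and> Gs ! i = subst \<sigma> c \<and>
          (\<forall>p\<in>set ps. \<exists>j<i. Gs ! j = subst \<sigma> p))" using h(1,2) e h(3) by (metis (no_types, lifting))
  qed
qed

lemma deriv_append:
  assumes "is_derivation L C Fs" "is_derivation L C Gs"
  shows "is_derivation L C (Fs @ Gs)"
  unfolding is_derivation_dstep
proof (intro allI impI)
  fix i assume i: "i < length (Fs @ Gs)"
  show "dstep L C (Fs @ Gs) i"
  proof (cases "i < length Fs")
    case True
    then have "dstep L C Fs i" using assms(1) by (simp add: is_derivation_dstep)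
    moreover have "\<forall>j\<le>i. (Fs @ Gs) ! j = Fs ! j" using True by (simp add: nth_append)
    ultimately show ?thesis by (rule dstep_mono)
  next
    case False
    define k where "k = i - length Fs"
    have k: "k < length Gs" "i = length Fs + k" using i False by (auto simp: k_def)
    have e: "(Fs @ Gs) ! i = Gs ! k" using k by (simp add: nth_append)
    from assms(2) k(1) have "dstep L C Gs k" by (simp add: is_derivation_dstep)
    then have
      "(\<exists>A \<sigma>. A \<in> set (calc_axioms C) \<and> is_subst L \<sigma> \<and> Gs ! k = subst \<sigma> A) \<or>
        (\<exists>ps c \<sigma>. (ps, c) \<in> set (calc_rules C) \<and> is_subst L \<sigma> \<and> Gs ! k = subst \<sigma> c \<and>
          (\<forall>p\<in>set ps. \<exists>j<k. Gs ! j = subst \<sigma> p))" unfolding dstep_def by blast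
    then show ?thesis unfolding dstep_def
    proof
      assume "\<exists>A \<sigma>. A \<in> set (calc_axioms C) \<and> is_subst L \<sigma> \<and> Gs ! k = subst \<sigma> A"
      then show "(\<exists>A \<sigma>. A \<in> set (calc_axioms C) \<and> is_subst L \<sigma> \<and> (Fs @ Gs) ! i = subst \<sigma> A) \<or>
        (\<exists>ps c \<sigma>. (ps, c) \<in> set (calc_rules C) \<and> is_subst L \<sigma> \<and> (Fs @ Gs) ! i = subst \<sigma> c \<and>
          (\<forall>p\<in>set ps. \<exists>j<i. (Fs @ Gs) ! j = subst \<sigma> p))" using e by simp
    next
      assume "\<exists>ps c \<sigma>. (ps, c) \<in> set (calc_rules C) \<and> is_subst L \<sigma> \<and> Gs ! k = subst \<sigma> c \<and>
          (\<forall>p\<in>set ps. \<exists>j<k. Gs ! j = subst \<sigma> p)"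
      then obtain ps c \<sigma> where h: "(ps, c) \<in> set (calc_rules C)" "is_subst L \<sigma>" "Gs ! k = subst \<sigma> c"
          "\<forall>p\<in>set ps. \<exists>j<k. Gs ! j = subst \<sigma> p" by blast
      have "\<forall>p\<in>set ps. \<exists>j<i. (Fs @ Gs) ! j = subst \<sigma> p"
      proof
        fix p assume "p \<in> set ps"
        then obtain j where "j < k" "Gs ! j = subst \<sigma> p" using h(4) by blast
        then show "\<exists>j<i. (Fs @ Gs) ! j = subst \<sigma> p"
          by (intro exI[of _ "length Fs + j"]) (simp add: k nth_append)
      qed
      then show "(\<exists>A \<sigma>. A \<in> set (calc_axioms C) \<and> is_subst L \<sigma> \<and> (Fs @ Gs) ! i = subst \<sigma> A) \<or>
        (\<exists>ps c \<sigma>. (ps, c) \<in> set (calc_rules C) \<and> is_subst L \<sigma> \<and> (Fs @ Gs) ! i = subst \<sigma> c \<and>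
          (\<forall>p\<in>set ps. \<exists>j<i. (Fs @ Gs) ! j = subst \<sigma> p))" using h(1,2) e h(3) by (metis (no_types, lifting))
    qed
  qed
qed

lemma deriv_snoc:
  assumes "is_derivation L C Fs" "(ps, c) \<in> set (calc_rules C)" "is_subst L \<sigma>"
    "\<forall>p\<in>set ps. subst \<sigma> p \<in> set Fs"
  shows "is_derivation L C (Fs @ [subst \<sigma> c])"
  unfolding is_derivation_dstep
proof (intro allI impI)
  fix i assume i: "i < length (Fs @ [subst \<sigma> c])"
  show "dstep L C (Fs @ [subst \<sigma> c]) i"
  proof (cases "i < length Fs")
    case True
    then have "dstep L C Fs i" using assms(1) by (simp add: is_derivation_dstep)
    moreover have "\<forall>j\<le>i. (Fs @ [subst \<sigma> c]) ! j = Fs ! j" using True by (simp add: nth_append)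
    ultimately show ?thesis by (rule dstep_mono)
  next
    case False
    then have ii: "i = length Fs" using i by simp
    have "\<forall>p\<in>set ps. \<exists>j<i. (Fs @ [subst \<sigma> c]) ! j = subst \<sigma> p"
    proof
      fix p assume "p \<in> set ps"
      then have "subst \<sigma> p \<in> set Fs" using assms(4) by blast
      then obtain j where "j < length Fs" "Fs ! j = subst \<sigma> p" by (metis in_set_conv_nth)
      then show "\<exists>j<i. (Fs @ [subst \<sigma> c]) ! j = subst \<sigma> p" by (auto simp: ii nth_append)
    qed
    moreover have "(Fs @ [subst \<sigma> c]) ! i = subst \<sigma> c" by (simp add: ii)
    ultimately show ?thesis unfolding dstep_def using assms(2,3) by blast
  qed
qed

lemma collect_derivs:
  assumes "\<forall>p\<in>set ps. \<exists>Fs. is_derivation L C Fs \<and> F p \<in> set Fs"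
  shows "\<exists>Fs. is_derivation L C Fs \<and> (\<forall>p\<in>set ps. F p \<in> set Fs)"
  using assms
proof (induction ps)
  case Nil
  then show ?case by (intro exI[of _ "[]"]) (simp add: is_derivation_def)
next
  case (Cons a ps)
  then obtain Fs where "is_derivation L C Fs" "\<forall>p\<in>set ps. F p \<in> set Fs" by auto
  moreover obtain Gs where "is_derivation L C Gs" "F a \<in> set Gs" using Cons.prems by auto
  ultimately show ?case by (intro exI[of _ "Fs @ Gs"]) (auto intro: deriv_append)
qed

lemma der_Thm: "der L C F \<Longrightarrow> F \<in> Thm L C"
proof (induction rule: der.induct)
  case (ax A \<sigma>)
  have "is_derivation L C [subst \<sigma> A]" using ax by (auto simp: is_derivation_def)
  then show ?case unfolding Thm_def by force
next
  case (rl ps c \<sigma>)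
  then have "\<forall>p\<in>set ps. \<exists>Fs. is_derivation L C Fs \<and> subst \<sigma> p \<in> set Fs" by (auto simp: Thm_def)
  from collect_derivs[OF this] obtain Fs where "is_derivation L C Fs" "\<forall>p\<in>set ps. subst \<sigma> p \<in> set Fs"
    by blast
  then have "is_derivation L C (Fs @ [subst \<sigma> c])" using deriv_snoc rl by metis
  then show ?case unfolding Thm_def by force
qed

lemma Thm_der: "F \<in> Thm L C \<Longrightarrow> der L C F"
proof -
  assume "F \<in> Thm L C"
  then obtain Fs where "is_derivation L C Fs" "F \<in> set Fs" unfolding Thm_def by blast
  then obtain i where "i < length Fs" "Fs ! i = F" by (metis in_set_conv_nth)
  then show "der L C F" using deriv_der[OF \<open>is_derivation L C Fs\<close>] by metis
qed

lemma reval_det: "reval g xs y \<Longrightarrow> reval g xs y' \<Longrightarrow> y = y'"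
proof (induction arbitrary: y' rule: reval.induct)
  case (zero xs) then show ?case by (auto elim: reval.cases)
next
  case (succ x xs) then show ?case by (auto elim: reval.cases)
next
  case (proj i xs) then show ?case by (auto elim: reval.cases)
next
  case (comp ys gs xs f z)
  from comp.prems obtain ys' where "length ys' = length gs" "\<forall>i<length gs. reval (gs ! i) xs (ys' ! i)"
    "reval f ys' y'" by (auto elim: reval.cases)
  note ys' = this
  have "ys = ys'"
  proof (rule nth_equalityI)
    show "length ys = length ys'" using ys' comp.hyps(1) by simp
    fix i assume "i < length ys"
    then have "i < length gs" using comp.hyps(1) by simp
    then show "ys ! i = ys' ! i" using comp.IH(1) ys'(2) by blast
  qed
  then show ?case using comp.IH(2) ys'(3) by blast
next
  case (prim0 f xs z g)
  from prim0.prems show ?case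
    by (cases rule: reval.cases) (simp_all add: prim0.IH)
next
  case (primS f g n xs y z)
  from primS.prems show ?case
  proof (cases rule: reval.cases)
    case (primS y2)
    then have "y = y2" using primS.IH(1) by simp
    then show ?thesis using primS.IH(2) primS by simp
  qed
next
  case (mn f n xs)
  from mn.prems obtain n' where n': "reval f (n' # xs) 0" "\<forall>m<n'. \<exists>y. y \<noteq> 0 \<and> reval f (m # xs) y"
    "y' = n'" by (auto elim: reval.cases)
  show ?case
  proof (rule ccontr)
    assume "n \<noteq> y'"
    then consider "n < n'" | "n' < n" using n' by linarith
    then show False
    proof cases
      case 1 then show False using n' mn.IH(1) by blast
    next
      case 2 then show False using n' mn.IH(2) by blast
    qed
  qed
qed



abbreviation "zc \<equiv> Con 0 []"
abbreviation "sc t \<equiv> Con 1 [t]"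
abbreviation "fnil \<equiv> Con 2 []"
abbreviation "cns a b \<equiv> Con 3 [a, b]"
abbreviation "pZero \<equiv> Con 4 []"
abbreviation "pSucc \<equiv> Con 5 []"
abbreviation "pProj i \<equiv> Con 6 [i]"
abbreviation "pComp a b \<equiv> Con 7 [a, b]"
abbreviation "pPrim a b \<equiv> Con 8 [a, b]"
abbreviation "pMn a \<equiv> Con 9 [a]"
abbreviation "fR a b c \<equiv> Con 10 [a, b, c]"
abbreviation "fRL a b c \<equiv> Con 11 [a, b, c]"
abbreviation "fMA a b c \<equiv> Con 12 [a, b, c]"
abbreviation "fNth a b c \<equiv> Con 13 [a, b, c]"
abbreviation "fAdd a b c \<equiv> Con 14 [a, b, c]"
abbreviation "fTri a b \<equiv> Con 15 [a, b]"
abbreviation "fPair a b c \<equiv> Con 16 [a, b, c]"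
abbreviation "fEN a b \<equiv> Con 17 [a, b]"
abbreviation "fCode a b \<equiv> Con 18 [a, b]"
abbreviation "fIn a \<equiv> Con 19 [a]"
abbreviation "fBot \<equiv> Con 20 []"

fun num :: "nat \<Rightarrow> form" where
  "num 0 = zc"
| "num (Suc n) = sc (num n)"

fun plist :: "form list \<Rightarrow> form" where
  "plist [] = fnil"
| "plist (x # xs) = cns x (plist xs)"

abbreviation "nlist xs \<equiv> plist (map num xs)"

fun prog :: "recf \<Rightarrow> form" where
  "prog Zero = pZero"
| "prog Succ = pSucc"
| "prog (Proj i) = pProj (num i)"
| "prog (Comp f gs) = pComp (prog f) (plist (map prog gs))"
| "prog (Prim f g) = pPrim (prog f) (prog g)"
| "prog (Mn f) = pMn (prog f)"

lemma num_eq_Con: "(num n = Con c as) = ((n = 0 \<and> c = 0 \<and> as = []) \<or> (\<exists>m. n = Suc m \<and> c = 1 \<and> as = [num m]))"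
  by (cases n) auto

lemma num_inj[simp]: "(num a = num b) = (a = b)"
proof (induction a arbitrary: b)
  case 0 then show ?case by (cases b) auto
next
  case (Suc a) then show ?case by (cases b) auto
qed

lemma plist_eq_Con: "(plist ts = Con c as) = ((ts = [] \<and> c = 2 \<and> as = []) \<or> (\<exists>t ts'. ts = t # ts' \<and> c = 3 \<and> as = [t, plist ts']))"
  by (cases ts) auto

lemma prog_eq_Con: "(prog g = Con c as) = (
   (g = Zero \<and> c = 4 \<and> as = []) \<or> (g = Succ \<and> c = 5 \<and> as = []) \<or>
   (\<exists>i. g = Proj i \<and> c = 6 \<and> as = [num i]) \<or>
   (\<exists>f gs. g = Comp f gs \<and> c = 7 \<and> as = [prog f, plist (map prog gs)]) \<or>
   (\<exists>f h. g = Prim f h \<and> c = 8 \<and> as = [prog f, prog h]) \<or>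
   (\<exists>f. g = Mn f \<and> c = 9 \<and> as = [prog f]))"
  by (cases g) auto

lemma num_1: "num 1 = sc zc" by simp

section \<open>Semantic invariants\<close>

definition "goodR p t s = (\<forall>g xs. p = prog g \<longrightarrow> t = nlist xs \<longrightarrow> (\<exists>y. s = num y \<and> reval g xs y))"
definition "goodRL p t s = (\<forall>gs xs. p = plist (map prog gs) \<longrightarrow> t = nlist xs \<longrightarrow>
   (\<exists>ys. s = nlist ys \<and> length ys = length gs \<and> (\<forall>i<length gs. reval (gs ! i) xs (ys ! i))))"
definition "goodMA p n t = (\<forall>g xs. p = prog g \<longrightarrow> t = nlist xs \<longrightarrow>
   (\<exists>k. n = num k \<and> (\<forall>m<k. \<exists>y. y \<noteq> 0 \<and> reval g (m # xs) y)))"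
definition "goodNth n t s = (\<forall>i xs. n = num i \<longrightarrow> t = nlist xs \<longrightarrow> i < length xs \<and> s = num (xs ! i))"
definition "goodAdd x y z = (\<forall>a b. x = num a \<longrightarrow> y = num b \<longrightarrow> z = num (a + b))"
definition "goodTri n t = (\<forall>k. n = num k \<longrightarrow> t = num (triangle k))"
definition "goodPair x y z = (\<forall>a b. x = num a \<longrightarrow> y = num b \<longrightarrow> z = num (prod_encode (a, b)))"
definition "goodEN n e = (\<forall>k. n = num k \<longrightarrow> e = num (enc_form (num k)))"

lemma plist_inj[simp]: "(plist a = plist b) = (a = b)"
proof (induction a arbitrary: b)
  case Nil then show ?case by (cases b) auto
next
  case (Cons x a) then show ?case by (cases b) auto
qed

lemma map_inj_helper: "(\<forall>x\<in>set xs. \<forall>y. f x = f y \<longrightarrow> x = y) \<Longrightarrow> map f xs = map f ys \<Longrightarrow> xs = ys"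
proof (induction xs arbitrary: ys)
  case Nil then show ?case by simp
next
  case (Cons x xs) then show ?case by (cases ys) auto
qed

lemma prog_inj_aux: "prog a = prog b \<Longrightarrow> a = b"
proof (induction a arbitrary: b)
  case (Comp f gs)
  then show ?case
    by (cases b) (auto intro: map_inj_helper)
qed (case_tac b; auto)+

lemma prog_inj[simp]: "(prog a = prog b) = (a = b)"
  using prog_inj_aux by blast

lemma map_prog_inj[simp]: "(map prog a = map prog b) = (a = b)"
  using map_inj_helper[of a prog b] prog_inj_aux by blast

lemma map_num_inj[simp]: "(map num a = map num b) = (a = b)"
  using map_inj_helper[of a num b] by auto

lemma subst_num[simp]: "subst \<sigma> (num n) = num n"
  by (induction n) auto

lemma subst_plist[simp]: "subst \<sigma> (plist ts) = plist (map (subst \<sigma>) ts)"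
  by (induction ts) auto

lemma subst_prog[simp]: "subst \<sigma> (prog g) = prog g"
  by (induction g) (auto simp: map_eq_conv)

lemma Con_eq_num: "(Con c as = num n) = (num n = Con c as)" by (rule eq_commute)
lemma Con_eq_plist: "(Con c as = plist ts) = (plist ts = Con c as)" by (rule eq_commute)
lemma Con_eq_prog: "(Con c as = prog g) = (prog g = Con c as)" by (rule eq_commute)

lemmas inv_simps = map_eq_Cons_conv num_eq_Con plist_eq_Con prog_eq_Con Con_eq_num Con_eq_plist Con_eq_prog

lemma r1: "goodR pZero l zc"
  unfolding goodR_def by (auto simp: inv_simps intro: reval.zero)

lemma r2: "goodR pSucc (cns x l) (sc x)"
  unfolding goodR_def by (auto simp: inv_simps intro: reval.succ)

lemma r3: "goodNth i l y \<Longrightarrow> goodR (pProj i) l y"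
  unfolding goodR_def goodNth_def by (auto simp: inv_simps intro: reval.proj)

lemma r4: "goodRL gs l ys \<Longrightarrow> goodR fp ys z \<Longrightarrow> goodR (pComp fp gs) l z"
  unfolding goodR_def goodRL_def by (auto simp: inv_simps) (auto intro: reval.intros)

lemma r5: "goodR fp l y \<Longrightarrow> goodR (pPrim fp gp) (cns zc l) y"
  unfolding goodR_def by (auto simp: inv_simps) (auto intro: reval.intros)

lemma r6: "goodR (pPrim fp gp) (cns n l) w \<Longrightarrow> goodR gp (cns n (cns w l)) y \<Longrightarrow>
    goodR (pPrim fp gp) (cns (sc n) l) y"
  unfolding goodR_def by (auto simp: inv_simps) (auto intro: reval.intros)

lemma r7: "goodR fp (cns n l) zc \<Longrightarrow> goodMA fp n l \<Longrightarrow> goodR (pMn fp) l n"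
  unfolding goodR_def goodMA_def by (auto simp: inv_simps) (auto intro!: reval.mn)

lemma r8: "goodMA fp zc l"
  unfolding goodMA_def by (auto simp: inv_simps)

lemma r9: "goodMA fp n l \<Longrightarrow> goodR fp (cns n l) (sc y) \<Longrightarrow> goodMA fp (sc n) l"
  unfolding goodR_def goodMA_def by (auto simp: inv_simps less_Suc_eq) (use zero_less_Suc in blast)

lemma r10: "goodRL fnil l fnil"
  unfolding goodRL_def by (auto simp: inv_simps)

lemma r11: "goodR g l y \<Longrightarrow> goodRL gs l ys \<Longrightarrow> goodRL (cns g gs) l (cns y ys)"
  unfolding goodR_def goodRL_def by (auto simp: inv_simps nth_Cons split: nat.splits)

lemma r12: "goodNth zc (cns x l) x"
  unfolding goodNth_def by (auto simp: inv_simps)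

lemma r13: "goodNth i l y \<Longrightarrow> goodNth (sc i) (cns x l) y"
  unfolding goodNth_def by (auto simp: inv_simps)

lemma r14: "goodAdd x zc x"
  unfolding goodAdd_def by (auto simp: inv_simps)

lemma r15: "goodAdd x y z \<Longrightarrow> goodAdd x (sc y) (sc z)"
  unfolding goodAdd_def by (auto simp: inv_simps)

lemma r16: "goodTri zc zc"
  unfolding goodTri_def by (auto simp: inv_simps)

lemma r17: "goodTri n t \<Longrightarrow> goodAdd t (sc n) t2 \<Longrightarrow> goodTri (sc n) t2"
  unfolding goodTri_def goodAdd_def by (auto simp: inv_simps)

lemma r18: "goodAdd a b d \<Longrightarrow> goodTri d t \<Longrightarrow> goodAdd t a c \<Longrightarrow> goodPair a b c"
  unfolding goodTri_def goodAdd_def goodPair_def by (auto simp: prod_encode_def)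

lemma r19: "goodPair (num 1) zc e \<Longrightarrow> goodEN zc e"
  unfolding goodEN_def goodPair_def by (auto simp: inv_simps)

lemma r20: "goodEN n e1 \<Longrightarrow> goodPair e1 zc p1 \<Longrightarrow> goodPair (num 2) (sc p1) e \<Longrightarrow> goodEN (sc n) e"
  unfolding goodEN_def goodPair_def by (auto simp: inv_simps)



definition L0 :: language where "L0 = [0,1,0,2,0,0,1,2,2,1,3,3,3,3,3,2,3,2,2,1,0]"
definition M0 :: logic where
  "M0 = (2, [1], map (\<lambda>c. replicate (2 ^ (L0 ! c)) (if c = 20 then 0 else 1)) [0..<21])"
definition "A0 = list_encode L0"
definition "B0 = enc_logic M0"
definition "Ecode k = prod_encode (A0, prod_encode (prod_encode (Suc (prod_encode (enc_form (fIn (num k)), 0)), k), B0))"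

definition "goodCode x y = (\<forall>k. x = num k \<longrightarrow> y = num (Ecode k))"

lemma r21: "goodEN x e1 \<Longrightarrow> goodPair e1 zc p1 \<Longrightarrow> goodPair (num 20) (sc p1) e2 \<Longrightarrow> goodPair e2 zc p2 \<Longrightarrow>
  goodPair (sc p2) x p3 \<Longrightarrow> goodPair p3 (num B0) p4 \<Longrightarrow> goodPair (num A0) p4 y \<Longrightarrow> goodCode x y"
  unfolding goodEN_def goodPair_def goodCode_def Ecode_def
  by (auto simp: inv_simps)

lemma r22: "x = num k \<Longrightarrow> goodCode x y \<Longrightarrow> goodR (prog f) (cns y fnil) (sc zc) \<Longrightarrow> reval f [Ecode k] 1"
  unfolding goodCode_def goodR_def
  by (auto simp: inv_simps)

abbreviation "V \<equiv> Var"

definition rules :: "recf \<Rightarrow> (form list \<times> form) list" where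
 "rules f = [
  ([], fR pZero (V 0) zc),
  ([], fR pSucc (cns (V 0) (V 1)) (sc (V 0))),
  ([fNth (V 0) (V 1) (V 2)], fR (pProj (V 0)) (V 1) (V 2)),
  ([fRL (V 1) (V 2) (V 3), fR (V 0) (V 3) (V 4)], fR (pComp (V 0) (V 1)) (V 2) (V 4)),
  ([fR (V 0) (V 2) (V 3)], fR (pPrim (V 0) (V 1)) (cns zc (V 2)) (V 3)),
  ([fR (pPrim (V 0) (V 1)) (cns (V 2) (V 3)) (V 4), fR (V 1) (cns (V 2) (cns (V 4) (V 3))) (V 5)],
     fR (pPrim (V 0) (V 1)) (cns (sc (V 2)) (V 3)) (V 5)),
  ([fR (V 0) (cns (V 1) (V 2)) zc, fMA (V 0) (V 1) (V 2)], fR (pMn (V 0)) (V 2) (V 1)),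
  ([], fMA (V 0) zc (V 1)),
  ([fMA (V 0) (V 1) (V 2), fR (V 0) (cns (V 1) (V 2)) (sc (V 3))], fMA (V 0) (sc (V 1)) (V 2)),
  ([], fRL fnil (V 0) fnil),
  ([fR (V 0) (V 2) (V 3), fRL (V 1) (V 2) (V 4)], fRL (cns (V 0) (V 1)) (V 2) (cns (V 3) (V 4))),
  ([], fNth zc (cns (V 0) (V 1)) (V 0)),
  ([fNth (V 0) (V 1) (V 2)], fNth (sc (V 0)) (cns (V 3) (V 1)) (V 2)),
  ([], fAdd (V 0) zc (V 0)),
  ([fAdd (V 0) (V 1) (V 2)], fAdd (V 0) (sc (V 1)) (sc (V 2))),
  ([], fTri zc zc),
  ([fTri (V 0) (V 1), fAdd (V 1) (sc (V 0)) (V 2)], fTri (sc (V 0)) (V 2)),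
  ([fAdd (V 0) (V 1) (V 2), fTri (V 2) (V 3), fAdd (V 3) (V 0) (V 4)], fPair (V 0) (V 1) (V 4)),
  ([fPair (num 1) zc (V 0)], fEN zc (V 0)),
  ([fEN (V 0) (V 1), fPair (V 1) zc (V 2), fPair (num 2) (sc (V 2)) (V 3)], fEN (sc (V 0)) (V 3)),
  ([fEN (V 0) (V 1), fPair (V 1) zc (V 2), fPair (num 20) (sc (V 2)) (V 3), fPair (V 3) zc (V 4),
    fPair (sc (V 4)) (V 0) (V 5), fPair (V 5) (num B0) (V 6), fPair (num A0) (V 6) (V 7)], fCode (V 0) (V 7)),
  ([fIn (V 0), fCode (V 0) (V 1), fR (prog f) (cns (V 1) fnil) (sc zc)], fBot)]"

definition "x0 f = list_encode (map (\<lambda>(ps, c). prod_encode (list_encode (map enc_form ps), enc_form c)) (rules f))"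
definition Cf :: "recf \<Rightarrow> calculus" where "Cf f = ([fIn (num (x0 f))], rules f)"

definition good :: "recf \<Rightarrow> nat \<Rightarrow> form \<Rightarrow> bool" where
  "good f k F = (case F of Var _ \<Rightarrow> True | Con c as \<Rightarrow>
     (if c = 10 \<and> length as = 3 then goodR (as ! 0) (as ! 1) (as ! 2)
      else if c = 11 \<and> length as = 3 then goodRL (as ! 0) (as ! 1) (as ! 2)
      else if c = 12 \<and> length as = 3 then goodMA (as ! 0) (as ! 1) (as ! 2)
      else if c = 13 \<and> length as = 3 then goodNth (as ! 0) (as ! 1) (as ! 2)
      else if c = 14 \<and> length as = 3 then goodAdd (as ! 0) (as ! 1) (as ! 2)
      else if c = 15 \<and> length as = 2 then goodTri (as ! 0) (as ! 1)
      else if c = 16 \<and> length as = 3 then goodPair (as ! 0) (as ! 1) (as ! 2)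
      else if c = 17 \<and> length as = 2 then goodEN (as ! 0) (as ! 1)
      else if c = 18 \<and> length as = 2 then goodCode (as ! 0) (as ! 1)
      else if c = 19 \<and> length as = 1 then as ! 0 = num k
      else if c = 20 then reval f [Ecode k] 1
      else True))"

lemma good_simps[simp]:
  "good f k (fR a b c) = goodR a b c"
  "good f k (fRL a b c) = goodRL a b c"
  "good f k (fMA a b c) = goodMA a b c"
  "good f k (fNth a b c) = goodNth a b c"
  "good f k (fAdd a b c) = goodAdd a b c"
  "good f k (fTri a b) = goodTri a b"
  "good f k (fPair a b c) = goodPair a b c"
  "good f k (fEN a b) = goodEN a b"
  "good f k (fCode a b) = goodCode a b"
  "good f k (fIn a) = (a = num k)"
  "good f k fBot = reval f [Ecode k] 1"
  by (simp_all add: good_def)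

lemma rules_good:
  assumes "(ps, c) \<in> set (rules f)" "\<forall>p\<in>set ps. good f k (subst \<sigma> p)"
  shows "good f k (subst \<sigma> c)"
  using assms unfolding rules_def
  apply (simp only: set_simps insert_iff empty_iff prod.inject)
  apply (elim disjE conjE FalseE)
  apply (hypsubst, simp only: subst.simps list.map list.set ball_simps good_simps subst_num subst_prog simp_thms;
     (elim conjE)?; (blast intro: r1 r2 r3 r4 r5 r6 r7 r8 r9 r10 r11 r12 r13 r14 r15 r16 r17 r18 r19 r20 r21 r22))+
  done

lemma der_good: "der L0 (Cf f) F \<Longrightarrow> good f (x0 f) F"
proof (induction rule: der.induct)
  case (ax A \<sigma>)
  then show ?case by (simp add: Cf_def calc_axioms_def)
next
  case (rl ps c \<sigma>)
  then show ?case using rules_good[of ps c f] by (simp add: Cf_def calc_rules_def)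
qed


lemma L0_nth[simp]:
  "L0 ! Suc 0 = Suc 0"
  "L0 ! 0 = 0"
  "L0 ! 1 = 1"
  "L0 ! 2 = 0"
  "L0 ! 3 = 2"
  "L0 ! 4 = 0"
  "L0 ! 5 = 0"
  "L0 ! 6 = 1"
  "L0 ! 7 = 2"
  "L0 ! 8 = 2"
  "L0 ! 9 = 1"
  "L0 ! 10 = 3"
  "L0 ! 11 = 3"
  "L0 ! 12 = 3"
  "L0 ! 13 = 3"
  "L0 ! 14 = 3"
  "L0 ! 15 = 2"
  "L0 ! 16 = 3"
  "L0 ! 17 = 2"
  "L0 ! 18 = 2"
  "L0 ! 19 = 1"
  "L0 ! 20 = 0"
  by (simp_all add: L0_def)

lemma length_L0[simp]: "length L0 = 21" by (simp add: L0_def)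

lemma wf_num[simp]: "wf_form L0 (num n)"
  by (induction n) auto

lemma wf_plist: "(\<forall>t\<in>set ts. wf_form L0 t) \<Longrightarrow> wf_form L0 (plist ts)"
  by (induction ts) auto

lemma wf_prog[simp]: "wf_form L0 (prog g)"
  by (induction g) (auto intro!: wf_plist)

lemma wf_pprog[simp]: "wf_form L0 (plist (map prog gs))"
  by (rule wf_plist) auto

lemma wf_nlist[simp]: "wf_form L0 (nlist xs)"
  by (rule wf_plist) auto

abbreviation "derC f \<equiv> der L0 (Cf f)"

lemma rule_app:
  assumes "(ps, c) \<in> set (rules f)" "\<forall>i. wf_form L0 (\<sigma> i)" "\<forall>p\<in>set ps. derC f (subst \<sigma> p)"
  shows "derC f (subst \<sigma> c)"
  using der.rl[of ps c "Cf f" L0 \<sigma>] assms by (simp add: Cf_def calc_rules_def is_subst_def)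

lemma wf_upd: "wf_form L0 t \<Longrightarrow> \<forall>i. wf_form L0 (\<sigma> i) \<Longrightarrow> \<forall>i. wf_form L0 ((\<sigma>(j := t)) i)"
  by simp

lemma wf_zc: "\<forall>i. wf_form L0 ((\<lambda>_. zc) i)" by simp

section \<open>Completeness\<close>

lemma c_add: "derC f (fAdd (num a) (num b) (num (a + b)))"
proof (induction b)
  case 0
  show ?case using rule_app[of "[]" "fAdd (V 0) zc (V 0)" f "(\<lambda>_. zc)(0 := num a)"]
    by (simp add: rules_def wf_upd wf_zc)
next
  case (Suc b)
  then show ?case
    using rule_app[of "[fAdd (V 0) (V 1) (V 2)]" "fAdd (V 0) (sc (V 1)) (sc (V 2))" f
        "(\<lambda>_. zc)(0 := num a, 1 := num b, 2 := num (a + b))"]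
    by (simp add: rules_def wf_upd wf_zc)
qed


lemmas rsimps = rules_def wf_upd wf_zc

lemma c_tri: "derC f (fTri (num k) (num (triangle k)))"
proof (induction k)
  case 0
  show ?case using rule_app[of "[]" "fTri zc zc" f "\<lambda>_. zc"]
    by (simp add: rsimps)
next
  case (Suc k)
  then show ?case
    using c_add[of f "triangle k" "Suc k"]
      rule_app[of "[fTri (V 0) (V 1), fAdd (V 1) (sc (V 0)) (V 2)]" "fTri (sc (V 0)) (V 2)" f
        "(\<lambda>_. zc)(0 := num k, 1 := num (triangle k), 2 := num (triangle k + Suc k))"]
    by (simp add: rsimps)
qed

lemma c_pair: "derC f (fPair (num a) (num b) (num (prod_encode (a, b))))"
  using c_add[of f a b] c_tri[of f "a + b"] c_add[of f "triangle (a + b)" a]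
    rule_app[of "[fAdd (V 0) (V 1) (V 2), fTri (V 2) (V 3), fAdd (V 3) (V 0) (V 4)]" "fPair (V 0) (V 1) (V 4)" f
      "(\<lambda>_. zc)(0 := num a, 1 := num b, 2 := num (a + b), 3 := num (triangle (a + b)), 4 := num (triangle (a + b) + a))"]
  by (simp add: rsimps prod_encode_def)

lemma c_en: "derC f (fEN (num k) (num (enc_form (num k))))"
proof (induction k)
  case 0
  show ?case using c_pair[of f 1 0] rule_app[of "[fPair (num 1) zc (V 0)]" "fEN zc (V 0)" f
      "(\<lambda>_. zc)(0 := num (prod_encode (1, 0)))"]
    by (simp add: rsimps)
next
  case (Suc k)
  define e1 where "e1 = enc_form (num k)"
  define p1 where "p1 = prod_encode (e1, 0)"
  have e: "enc_form (num (Suc k)) = prod_encode (2, Suc p1)" by (simp add: e1_def p1_def)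
  show ?case
    using Suc c_pair[of f e1 0] c_pair[of f 2 "Suc p1"]
      rule_app[of "[fEN (V 0) (V 1), fPair (V 1) zc (V 2), fPair (num 2) (sc (V 2)) (V 3)]" "fEN (sc (V 0)) (V 3)" f
      "(\<lambda>_. zc)(0 := num k, 1 := num e1, 2 := num p1, 3 := num (prod_encode (2, Suc p1)))"]
    unfolding e by (simp add: rsimps e1_def p1_def)
qed


lemma c_code: "derC f (fCode (num k) (num (Ecode k)))"
proof -
  define e1 where "e1 = enc_form (num k)"
  define p1 where "p1 = prod_encode (e1, 0)"
  define e2 where "e2 = prod_encode (20, Suc p1)"
  define p2 where "p2 = prod_encode (e2, 0)"
  define p3 where "p3 = prod_encode (Suc p2, k)"
  define p4 where "p4 = prod_encode (p3, B0)"
  have e: "Ecode k = prod_encode (A0, p4)"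
    by (simp add: Ecode_def e1_def p1_def e2_def p2_def p3_def p4_def)
  show ?thesis
    using c_en[of f k] c_pair[of f e1 0] c_pair[of f 20 "Suc p1"] c_pair[of f e2 0]
      c_pair[of f "Suc p2" k] c_pair[of f p3 B0] c_pair[of f A0 p4]
      rule_app[of "[fEN (V 0) (V 1), fPair (V 1) zc (V 2), fPair (num 20) (sc (V 2)) (V 3), fPair (V 3) zc (V 4),
    fPair (sc (V 4)) (V 0) (V 5), fPair (V 5) (num B0) (V 6), fPair (num A0) (V 6) (V 7)]" "fCode (V 0) (V 7)" f
      "(\<lambda>_. zc)(0 := num k, 1 := num e1, 2 := num p1, 3 := num e2, 4 := num p2, 5 := num p3, 6 := num p4,
         7 := num (prod_encode (A0, p4)))"]
    unfolding e by (simp add: rsimps e1_def[symmetric] p1_def[symmetric] e2_def[symmetric]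
         p2_def[symmetric] p3_def[symmetric] p4_def[symmetric])
qed

lemma c_nth: "i < length xs \<Longrightarrow> derC f (fNth (num i) (nlist xs) (num (xs ! i)))"
proof (induction xs arbitrary: i)
  case Nil then show ?case by simp
next
  case (Cons x xs)
  show ?case
  proof (cases i)
    case 0
    then show ?thesis using rule_app[of "[]" "fNth zc (cns (V 0) (V 1)) (V 0)" f
      "(\<lambda>_. zc)(0 := num x, 1 := nlist xs)"] by (simp add: rsimps)
  next
    case (Suc j)
    then have "derC f (fNth (num j) (nlist xs) (num (xs ! j)))" using Cons by simp
    then show ?thesis using Suc rule_app[of "[fNth (V 0) (V 1) (V 2)]" "fNth (sc (V 0)) (cns (V 3) (V 1)) (V 2)" f
      "(\<lambda>_. zc)(0 := num j, 1 := nlist xs, 2 := num (xs ! j), 3 := num x)"] by (simp add: rsimps)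
  qed
qed

lemma c_rl: "length ys = length gs \<Longrightarrow> (\<forall>i<length gs. derC f (fR (prog (gs ! i)) (nlist xs) (num (ys ! i)))) \<Longrightarrow>
   derC f (fRL (plist (map prog gs)) (nlist xs) (nlist ys))"
proof (induction gs arbitrary: ys)
  case Nil
  then show ?case using rule_app[of "[]" "fRL fnil (V 0) fnil" f "(\<lambda>_. zc)(0 := nlist xs)"]
    by (simp add: rsimps)
next
  case (Cons g gs)
  then obtain y ys' where ys: "ys = y # ys'" by (cases ys) auto
  have h1: "derC f (fR (prog g) (nlist xs) (num y))" using Cons.prems ys by force
  have h2: "derC f (fRL (plist (map prog gs)) (nlist xs) (nlist ys'))"
    using Cons.IH[of ys'] Cons.prems ys by force
  show ?case using h1 h2 ys rule_app[of "[fR (V 0) (V 2) (V 3), fRL (V 1) (V 2) (V 4)]" "fRL (cns (V 0) (V 1)) (V 2) (cns (V 3) (V 4))" f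
      "(\<lambda>_. zc)(0 := prog g, 1 := plist (map prog gs), 2 := nlist xs, 3 := num y, 4 := nlist ys')"]
    by (simp add: rsimps)
qed

lemma c_ma: "(\<forall>m<k. \<exists>y. y \<noteq> 0 \<and> derC f (fR (prog g) (nlist (m # xs)) (num y))) \<Longrightarrow>
   derC f (fMA (prog g) (num k) (nlist xs))"
proof (induction k)
  case 0
  then show ?case using rule_app[of "[]" "fMA (V 0) zc (V 1)" f "(\<lambda>_. zc)(0 := prog g, 1 := nlist xs)"]
    by (simp add: rsimps)
next
  case (Suc k)
  then have h1: "derC f (fMA (prog g) (num k) (nlist xs))" by simp
  obtain y where "y \<noteq> 0" "derC f (fR (prog g) (nlist (k # xs)) (num y))" using Suc.prems by blast
  then obtain y' where h2: "derC f (fR (prog g) (nlist (k # xs)) (num (Suc y')))" by (cases y) auto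
  show ?case using h1 h2 rule_app[of "[fMA (V 0) (V 1) (V 2), fR (V 0) (cns (V 1) (V 2)) (sc (V 3))]" "fMA (V 0) (sc (V 1)) (V 2)" f
      "(\<lambda>_. zc)(0 := prog g, 1 := num k, 2 := nlist xs, 3 := num y')"]
    by (simp add: rsimps)
qed

lemma c_reval: "reval g xs y \<Longrightarrow> derC f (fR (prog g) (nlist xs) (num y))"
proof (induction rule: reval.induct)
  case (zero xs)
  then show ?case using rule_app[of "[]" "fR pZero (V 0) zc" f "(\<lambda>_. zc)(0 := nlist xs)"]
    by (simp add: rsimps)
next
  case (succ x xs)
  then show ?case using rule_app[of "[]" "fR pSucc (cns (V 0) (V 1)) (sc (V 0))" f "(\<lambda>_. zc)(0 := num x, 1 := nlist xs)"]
    by (simp add: rsimps)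
next
  case (proj i xs)
  then show ?case using c_nth[of i xs f] rule_app[of "[fNth (V 0) (V 1) (V 2)]" "fR (pProj (V 0)) (V 1) (V 2)" f
      "(\<lambda>_. zc)(0 := num i, 1 := nlist xs, 2 := num (xs ! i))"]
    by (simp add: rsimps)
next
  case (comp ys gs xs h z)
  have "derC f (fRL (plist (map prog gs)) (nlist xs) (nlist ys))"
    using comp.hyps(1) comp.IH(1) by (intro c_rl) auto
  then show ?case using comp.IH(2) rule_app[of "[fRL (V 1) (V 2) (V 3), fR (V 0) (V 3) (V 4)]" "fR (pComp (V 0) (V 1)) (V 2) (V 4)" f
      "(\<lambda>_. zc)(0 := prog h, 1 := plist (map prog gs), 2 := nlist xs, 3 := nlist ys, 4 := num z)"]
    by (simp add: rsimps)
next
  case (prim0 h xs z g)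
  then show ?case using rule_app[of "[fR (V 0) (V 2) (V 3)]" "fR (pPrim (V 0) (V 1)) (cns zc (V 2)) (V 3)" f
      "(\<lambda>_. zc)(0 := prog h, 1 := prog g, 2 := nlist xs, 3 := num z)"]
    by (simp add: rsimps)
next
  case (primS h g n xs y z)
  then show ?case using rule_app[of "[fR (pPrim (V 0) (V 1)) (cns (V 2) (V 3)) (V 4), fR (V 1) (cns (V 2) (cns (V 4) (V 3))) (V 5)]"
     "fR (pPrim (V 0) (V 1)) (cns (sc (V 2)) (V 3)) (V 5)" f
      "(\<lambda>_. zc)(0 := prog h, 1 := prog g, 2 := num n, 3 := nlist xs, 4 := num y, 5 := num z)"]
    by (simp add: rsimps)
next
  case (mn h n xs)
  have "derC f (fMA (prog h) (num n) (nlist xs))"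
    using mn.IH(2) by (intro c_ma) blast
  then show ?case using mn.IH(1) rule_app[of "[fR (V 0) (cns (V 1) (V 2)) zc, fMA (V 0) (V 1) (V 2)]" "fR (pMn (V 0)) (V 2) (V 1)" f
      "(\<lambda>_. zc)(0 := prog h, 1 := num n, 2 := nlist xs)"]
    by (simp add: rsimps)
qed

lemma c_bot: "reval f [Ecode (x0 f)] 1 \<Longrightarrow> derC f fBot"
proof -
  assume r: "reval f [Ecode (x0 f)] 1"
  have h1: "derC f (fIn (num (x0 f)))"
    using der.ax[of "fIn (num (x0 f))" "Cf f" L0 "\<lambda>_. zc"] by (simp add: Cf_def calc_axioms_def is_subst_def)
  have h3: "derC f (fR (prog f) (cns (num (Ecode (x0 f))) fnil) (sc zc))"
    using c_reval[OF r, of f] by (simp add: num_1)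
  show ?thesis using h1 c_code[of f "x0 f"] h3
    rule_app[of "[fIn (V 0), fCode (V 0) (V 1), fR (prog f) (cns (V 1) fnil) (sc zc)]" fBot f
      "(\<lambda>_. zc)(0 := num (x0 f), 1 := num (Ecode (x0 f)))"]
    by (simp add: rsimps)
qed


lemma calc_over_Cf: "calc_over L0 (Cf f)"
  unfolding calc_over_def Cf_def calc_axioms_def calc_rules_def rules_def by simp

lemma ltables_M0: "c < 21 \<Longrightarrow> ltables M0 ! c = replicate (2 ^ (L0 ! c)) (if c = 20 then 0 else 1)"
  by (simp add: M0_def ltables_def)

lemma lvals_M0[simp]: "lvals M0 = 2" by (simp add: M0_def lvals_def)
lemma ldesig_M0[simp]: "ldesig M0 = [1]" by (simp add: M0_def ldesig_def)
lemma length_ltables_M0[simp]: "length (ltables M0) = 21" by (simp add: M0_def ltables_def)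

lemma logic_over_M0: "logic_over L0 M0"
  unfolding logic_over_def by (auto simp: ltables_M0)

lemma wf_subst: "wf_form L A \<Longrightarrow> is_subst L \<sigma> \<Longrightarrow> wf_form L (subst \<sigma> A)"
  by (induction A) (auto simp: is_subst_def)

lemma rules_Con: "(ps, c) \<in> set (rules f) \<Longrightarrow> \<exists>k as. c = Con k as"
  unfolding rules_def by auto

lemma der_wf: "derC f F \<Longrightarrow> wf_form L0 F \<and> (\<exists>c as. F = Con c as)"
proof (induction rule: der.induct)
  case (ax A \<sigma>)
  then show ?case using calc_over_Cf[of f] wf_subst[of L0 A \<sigma>]
    by (auto simp: Cf_def calc_axioms_def calc_over_def)
next
  case (rl ps c \<sigma>)
  have "wf_form L0 c" using rl.hyps(1) calc_over_Cf[of f] unfolding calc_over_def by auto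
  moreover obtain k as where "c = Con k as" using rules_Con rl.hyps(1) by (metis Cf_def calc_rules_def snd_conv)
  ultimately show ?case using wf_subst[of L0 c \<sigma>] rl.hyps(2) by auto
qed

lemma foldl_bound: "(\<forall>v\<in>set vs. v < (n::nat)) \<Longrightarrow> acc < n ^ j \<Longrightarrow>
   foldl (\<lambda>acc v. acc * n + v) acc vs < n ^ (j + length vs)"
proof (induction vs arbitrary: acc j)
  case Nil then show ?case by simp
next
  case (Cons v vs)
  have "acc * n + v < n ^ (Suc j)"
  proof -
    have "v < n" using Cons.prems(1) by simp
    then have "acc * n + v < acc * n + n" by simp
    also have "\<dots> = (acc + 1) * n" by simp
    also have "\<dots> \<le> n ^ j * n" using Cons.prems(2) by (intro mult_right_mono) auto
    finally show ?thesis by (simp add: mult.commute)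
  qed
  then show ?case using Cons.IH[of "acc * n + v" "Suc j"] Cons.prems by simp
qed

lemma tup_bound: "(\<forall>v\<in>set vs. v < n) \<Longrightarrow> 0 < n \<Longrightarrow> tup_index n vs < n ^ length vs"
  unfolding tup_index_def using foldl_bound[of vs n 0 0] by simp

lemma eval_Con_val: "wf_form L0 (Con c as) \<Longrightarrow> (\<forall>a\<in>set as. eval M0 v a < 2) \<Longrightarrow>
   eval M0 v (Con c as) = (if c = 20 then 0 else 1)"
proof -
  assume wf: "wf_form L0 (Con c as)" and b: "\<forall>a\<in>set as. eval M0 v a < 2"
  have c: "c < 21" "length as = L0 ! c" using wf by auto
  have "tup_index 2 (map (eval M0 v) as) < 2 ^ length as"
    using tup_bound[of "map (eval M0 v) as" 2] b by auto
  then show ?thesis using c by (simp add: truth_fun_def ltables_M0)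
qed

lemma eval_lt2: "wf_form L0 F \<Longrightarrow> valuation M0 v \<Longrightarrow> eval M0 v F < 2"
proof (induction F)
  case (Var x) then show ?case by (simp add: valuation_def)
next
  case (Con c as)
  then have "\<forall>a\<in>set as. eval M0 v a < 2" by auto
  then show ?case using eval_Con_val[OF Con.prems(1)] by simp
qed

lemma ws_iff: "weakly_sound L0 (Cf f) M0 = (fBot \<notin> Thm L0 (Cf f))"
proof
  assume "weakly_sound L0 (Cf f) M0"
  moreover have "fBot \<notin> Taut L0 M0"
  proof
    assume "fBot \<in> Taut L0 M0"
    then have "\<forall>v. valuation M0 v \<longrightarrow> eval M0 v fBot \<in> set (ldesig M0)" by (simp add: Taut_def)
    moreover have "valuation M0 (\<lambda>_. 0)" by (simp add: valuation_def)
    ultimately have "eval M0 (\<lambda>_. 0) fBot \<in> set (ldesig M0)" by blast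
    then have "eval M0 (\<lambda>_. 0) fBot \<in> set [1]" by simp
    moreover have "eval M0 (\<lambda>_. 0) fBot = 0" using eval_Con_val[of 20 "[]" "\<lambda>_. 0"] by simp
    ultimately show False by simp
  qed
  ultimately show "fBot \<notin> Thm L0 (Cf f)" unfolding weakly_sound_def by blast
next
  assume nb: "fBot \<notin> Thm L0 (Cf f)"
  show "weakly_sound L0 (Cf f) M0" unfolding weakly_sound_def
  proof
    fix F assume F: "F \<in> Thm L0 (Cf f)"
    then have d: "derC f F" by (rule Thm_der)
    then obtain c as where wf: "wf_form L0 F" and Fc: "F = Con c as" using der_wf by blast
    have "c \<noteq> 20"
    proof
      assume "c = 20"
      then have "as = []" using wf Fc by simp
      then show False using nb F Fc \<open>c = 20\<close> by simp
    qed
    have "\<forall>v. valuation M0 v \<longrightarrow> eval M0 v F \<in> set (ldesig M0)"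
    proof (intro allI impI)
      fix v assume "valuation M0 v"
      then have "\<forall>a\<in>set as. eval M0 v a < 2" using eval_lt2 wf Fc by auto
      then show "eval M0 v F \<in> set (ldesig M0)" using eval_Con_val[of c as v] wf Fc \<open>c \<noteq> 20\<close> by simp
    qed
    then show "F \<in> Taut L0 M0" using wf by (simp add: Taut_def)
  qed
qed

lemma enc_eq: "enc_instance L0 (Cf f) M0 = Ecode (x0 f)"
  unfolding enc_instance_def enc_calc_def Ecode_def A0_def B0_def x0_def Cf_def calc_axioms_def calc_rules_def
  by simp

theorem proposition3:
  shows "\<not> (\<exists>f. \<forall>L C M. calc_over L C \<longrightarrow> logic_over L M \<longrightarrow>
            reval f [enc_instance L C M] (if weakly_sound L C M then 1 else 0))"
proof
  assume "\<exists>f. \<forall>L C M. calc_over L C \<longrightarrow> logic_over L M \<longrightarrow>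
            reval f [enc_instance L C M] (if weakly_sound L C M then 1 else 0)"
  then obtain f where hf: "\<forall>L C M. calc_over L C \<longrightarrow> logic_over L M \<longrightarrow>
            reval f [enc_instance L C M] (if weakly_sound L C M then 1 else 0)" by blast
  have r: "reval f [Ecode (x0 f)] (if weakly_sound L0 (Cf f) M0 then 1 else 0)"
    using hf calc_over_Cf[of f] logic_over_M0 enc_eq[of f] by metis
  show False
  proof (cases "weakly_sound L0 (Cf f) M0")
    case True
    then have "reval f [Ecode (x0 f)] 1" using r by simp
    then have "fBot \<in> Thm L0 (Cf f)" using c_bot der_Thm by blast
    then show False using True ws_iff by blast
  next
    case False
    then have "fBot \<in> Thm L0 (Cf f)" using ws_iff by blast
    then have "good f (x0 f) fBot" using Thm_der der_good by blast
    then have "reval f [Ecode (x0 f)] 1" by simp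
    moreover have "reval f [Ecode (x0 f)] 0" using r False by simp
    ultimately show False using reval_det by fastforce
  qed
qed

end
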